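(* Let $G=(V,E)$ be a finite simple graph with nonempty vertex set and burning number $b(G)$. Consider the following procedure (Algorithm 1), which receives $G$ and $b(G)$ as input. Choose $s_1\in V$ arbitrarily. For $i=2,\dots,b(G)$, let $s_i$ be any vertex $u\in V$ maximizing $d(u,\{s_1,\dots,s_{i-1}\})$ (ties broken arbitrarily). For $i=b(G)+1,\dots,3b(G)-2$, let $s_i$ be an arbitrary vertex of $V$. Then, for every choice made by this procedure, the sequence $(s_1,\dots,s_k)$ with $k=3b(G)-2$ is a burning sequence of $G$, i.e. $\bigcup_{i=1}^{k} N_{k-i}[s_i]=V$. Consequently its length $3b(G)-2$ is at most $3-2/b(G)$ times the burning number, i.e. Algorithm 1 is a $(3-2/b(G))$-approximation algorithm for the graph burning problem.
   Context: For vertices $u,v$ of $G$, $d(u,v)$ is the number of edges on a shortest $u$–$v$ path ($+\infty$ if none exists), and for $S\subseteq V$, $d(u,S)=\min_{w\in S}d(u,w)$. For $v\in V$ and an integer $r\ge 0$, $N_r[v]=\{u\in V: d(u,v)\le r\}$ is the closed $r$-th neighborhood of $v$ (so $N_0[v]=\{v\}$). A burning sequence of length $k$ is a sequence $(s_1,\dots,s_k)$ of vertices of $G$ (repetitions allowed) such that $\bigcup_{i=1}^{k}N_{k-i}[s_i]=V$. The burning number $b(G)$ is the minimum length of a burning sequence of $G$. *)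

theory Defs
  imports Main "HOL-Library.Extended_Nat"
begin

definition simple_graph :: "'a set \<Rightarrow> ('a \<Rightarrow> 'a \<Rightarrow> bool) \<Rightarrow> bool" where
  "simple_graph V E \<longleftrightarrow> finite V \<and> (\<forall>x y. E x y \<longrightarrow> x \<in> V \<and> y \<in> V)
     \<and> (\<forall>x y. E x y \<longrightarrow> E y x) \<and> (\<forall>x. \<not> E x x)"

definition walk_len :: "'a set \<Rightarrow> ('a \<Rightarrow> 'a \<Rightarrow> bool) \<Rightarrow> 'a \<Rightarrow> 'a \<Rightarrow> nat \<Rightarrow> bool" where
  "walk_len V E u v n \<longleftrightarrow> (\<exists>xs. length xs = Suc n \<and> hd xs = u \<and> last xs = v
      \<and> set xs \<subseteq> V \<and> (\<forall>i<n. E (xs ! i) (xs ! Suc i)))"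

definition gdist :: "'a set \<Rightarrow> ('a \<Rightarrow> 'a \<Rightarrow> bool) \<Rightarrow> 'a \<Rightarrow> 'a \<Rightarrow> enat" where
  "gdist V E u v = (if \<exists>n. walk_len V E u v n then enat (LEAST n. walk_len V E u v n) else \<infinity>)"

definition gdist_set :: "'a set \<Rightarrow> ('a \<Rightarrow> 'a \<Rightarrow> bool) \<Rightarrow> 'a \<Rightarrow> 'a set \<Rightarrow> enat" where
  "gdist_set V E u S = (INF w\<in>S. gdist V E u w)"

definition closed_nbhd :: "'a set \<Rightarrow> ('a \<Rightarrow> 'a \<Rightarrow> bool) \<Rightarrow> nat \<Rightarrow> 'a \<Rightarrow> 'a set" where
  "closed_nbhd V E r v = {u \<in> V. gdist V E u v \<le> enat r}"

text \<open>Burning sequence (s_1,...,s_k), here 0-indexed list ss: s_{i+1} = ss!i has radius k-(i+1).\<close>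
definition burning_seq :: "'a set \<Rightarrow> ('a \<Rightarrow> 'a \<Rightarrow> bool) \<Rightarrow> 'a list \<Rightarrow> bool" where
  "burning_seq V E ss \<longleftrightarrow> set ss \<subseteq> V \<and>
     (\<Union>i<length ss. closed_nbhd V E (length ss - Suc i) (ss ! i)) = V"

definition burning_number :: "'a set \<Rightarrow> ('a \<Rightarrow> 'a \<Rightarrow> bool) \<Rightarrow> nat" where
  "burning_number V E = (LEAST k. \<exists>ss. length ss = k \<and> burning_seq V E ss)"

end

theory Submission
  imports Defs
begin

lemma walk0: "walk_len V E u v 0 \<longleftrightarrow> u = v \<and> u \<in> V"
proof
  assume "walk_len V E u v 0"
  then obtain xs where "length xs = 1" "hd xs = u" "last xs = v" "set xs \<subseteq> V"
    unfolding walk_len_def by auto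
  then show "u = v \<and> u \<in> V" by (cases xs) auto
next
  assume "u = v \<and> u \<in> V"
  then show "walk_len V E u v 0" unfolding walk_len_def by (intro exI[of _ "[u]"]) auto
qed

lemma walkSuc:
  assumes g: "simple_graph V E"
  shows "walk_len V E u v (Suc n) \<longleftrightarrow> (\<exists>w. E u w \<and> walk_len V E w v n)"
proof
  assume "walk_len V E u v (Suc n)"
  then obtain xs where xs: "length xs = Suc (Suc n)" "hd xs = u" "last xs = v" "set xs \<subseteq> V"
    "\<forall>i<Suc n. E (xs ! i) (xs ! Suc i)"
    unfolding walk_len_def by blast
  then obtain a ys where xsd: "xs = a # ys" by (cases xs) auto
  have "E u (ys ! 0)" using xs(2,5) xsd by force
  moreover have "walk_len V E (ys ! 0) v n"
    unfolding walk_len_def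
  proof (intro exI[of _ ys] conjI allI impI)
    show "length ys = Suc n" using xs xsd by simp
    then show "hd ys = ys ! 0" by (cases ys) auto
    show "last ys = v" using xs xsd \<open>length ys = Suc n\<close> by (cases ys) auto
    show "set ys \<subseteq> V" using xs xsd by auto
    fix i assume "i < n" then show "E (ys ! i) (ys ! Suc i)"
      using xs(5) xsd by (metis Suc_mono nth_Cons_Suc)
  qed
  ultimately show "\<exists>w. E u w \<and> walk_len V E w v n" by blast
next
  assume "\<exists>w. E u w \<and> walk_len V E w v n"
  then obtain w ys where e: "E u w" and ys: "length ys = Suc n" "hd ys = w" "last ys = v" "set ys \<subseteq> V"
    "\<forall>i<n. E (ys ! i) (ys ! Suc i)"
    unfolding walk_len_def by blast
  have uV: "u \<in> V" using g e unfolding simple_graph_def by blast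
  show "walk_len V E u v (Suc n)"
    unfolding walk_len_def
  proof (intro exI[of _ "u # ys"] conjI allI impI)
    show "length (u # ys) = Suc (Suc n)" using ys by simp
    show "hd (u # ys) = u" by simp
    show "last (u # ys) = v" using ys by auto
    show "set (u # ys) \<subseteq> V" using ys uV by auto
    fix i assume i: "i < Suc n"
    show "E ((u # ys) ! i) ((u # ys) ! Suc i)"
    proof (cases i)
      case 0 then show ?thesis using e ys by (cases ys) auto
    next
      case (Suc k) then show ?thesis using ys(5) i by simp
    qed
  qed
qed

lemma walk_trans:
  assumes g: "simple_graph V E"
  shows "walk_len V E u v m \<Longrightarrow> walk_len V E v w n \<Longrightarrow> walk_len V E u w (m + n)"
proof (induction m arbitrary: u)
  case 0
  then have "u = v" using walk0 by metis
  with 0 show ?case by simp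
next
  case (Suc m)
  then obtain x where "E u x" "walk_len V E x v m" using walkSuc[OF g] by blast
  then show ?case using Suc walkSuc[OF g] by auto
qed

lemma walk_sym:
  assumes g: "simple_graph V E"
  shows "walk_len V E u v n \<Longrightarrow> walk_len V E v u n"
proof (induction n arbitrary: u)
  case 0 then show ?case using walk0 by metis
next
  case (Suc n)
  then obtain x where e: "E u x" and w: "walk_len V E x v n" using walkSuc[OF g] by blast
  have "E x u" using g e unfolding simple_graph_def by blast
  moreover have "u \<in> V" using g e unfolding simple_graph_def by blast
  ultimately have "walk_len V E x u 1"
  proof -
    have "walk_len V E u u 0" using walk0 \<open>u \<in> V\<close> by metis
    then show ?thesis using walkSuc[OF g, of x u 0] \<open>E x u\<close> by auto
  qed
  with Suc.IH[OF w] show ?case using walk_trans[OF g] by fastforce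
qed

lemma gdist_le: "gdist V E u v \<le> enat n \<longleftrightarrow> (\<exists>m\<le>n. walk_len V E u v m)"
proof
  assume a: "gdist V E u v \<le> enat n"
  then have ex: "\<exists>m. walk_len V E u v m" unfolding gdist_def by (auto split: if_splits)
  then have "gdist V E u v = enat (LEAST m. walk_len V E u v m)" unfolding gdist_def by simp
  then show "\<exists>m\<le>n. walk_len V E u v m" using a LeastI_ex[OF ex] by auto
next
  assume "\<exists>m\<le>n. walk_len V E u v m"
  then obtain m where "m \<le> n" "walk_len V E u v m" by blast
  then show "gdist V E u v \<le> enat n" unfolding gdist_def
    by (auto intro: Least_le order_trans)
qed

lemma gdist_refl: assumes "u \<in> V" shows "gdist V E u u \<le> enat n"
proof -
  have "walk_len V E u u 0" using walk0[of V E u u] assms by simp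
  then show ?thesis using gdist_le[of V E u u n] by auto
qed

lemma gdist_two:
  assumes g: "simple_graph V E"
    and "gdist V E x c \<le> enat r" "gdist V E y c \<le> enat r'"
  shows "gdist V E y x \<le> enat (r' + r)"
proof -
  obtain m where m: "m \<le> r" "walk_len V E x c m" using assms(2) gdist_le[of V E x c r] by blast
  obtain m' where m': "m' \<le> r'" "walk_len V E y c m'" using assms(3) gdist_le[of V E y c r'] by blast
  have "walk_len V E y x (m' + m)" using walk_trans[OF g m'(2) walk_sym[OF g m(2)]] .
  moreover have "m' + m \<le> r' + r" using m m' by simp
  ultimately show ?thesis using gdist_le[of V E y x "r' + r"] by blast
qed

lemma nth_in_take:
  assumes "j < b" "b \<le> length xs" shows "xs ! j \<in> set (take b xs)"
proof -
  have "take b xs ! j = xs ! j" "j < length (take b xs)" using assms by simp_all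
  then show ?thesis by (metis nth_mem)
qed

lemma in_take_nth:
  assumes "w \<in> set (take b xs)" shows "\<exists>j<b. xs ! j = w"
proof -
  obtain j where j: "j < length (take b xs)" "take b xs ! j = w"
    using assms by (auto simp: in_set_conv_nth)
  then have "j < b" "xs ! j = w" by simp_all
  then show ?thesis by blast
qed

lemma INF_attained:
  fixes f :: "'b \<Rightarrow> 'c::{linorder,complete_lattice}"
  assumes "finite S" "S \<noteq> {}"
  shows "\<exists>w\<in>S. (INF x\<in>S. f x) = f w"
proof -
  have fin: "finite (f ` S)" "f ` S \<noteq> {}" using assms by auto
  have "Min (f ` S) \<in> f ` S" using Min_in[OF fin] .
  then obtain w where w: "w \<in> S" "f w = Min (f ` S)" by auto
  have le: "\<forall>x\<in>S. f w \<le> f x" using w(2) Min_le[OF fin(1)] by simp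
  have "(INF x\<in>S. f x) = f w"
  proof (rule antisym)
    show "(INF x\<in>S. f x) \<le> f w" using w(1) by (rule INF_lower)
    show "f w \<le> (INF x\<in>S. f x)" using le by (intro INF_greatest) simp
  qed
  with w show ?thesis by blast
qed

theorem theorem1:
  fixes V :: "'a set" and E :: "'a \<Rightarrow> 'a \<Rightarrow> bool" and ss :: "'a list"
  assumes "simple_graph V E" and "V \<noteq> {}"
    and "length ss = 3 * burning_number V E - 2"
    and "set ss \<subseteq> V"
    and "\<And>i u. 1 \<le> i \<Longrightarrow> i < burning_number V E \<Longrightarrow> u \<in> V \<Longrightarrow>
           gdist_set V E u (set (take i ss)) \<le> gdist_set V E (ss ! i) (set (take i ss))"
  shows "burning_seq V E ss \<and>
         real (length ss) \<le> (3 - 2 / real (burning_number V E)) * real (burning_number V E)"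
proof -
  note g = assms(1)
  define b where "b = burning_number V E"
  have finV: "finite V" using g unfolding simple_graph_def by blast
  obtain xs where xs: "set xs = V" using finite_list[OF finV] by blast
  have "burning_seq V E xs"
    unfolding burning_seq_def
  proof (intro conjI equalityI subsetI)
    fix x assume "x \<in> set xs"
    then show "x \<in> V" using xs by simp
  next
    fix v assume "v \<in> (\<Union>i<length xs. closed_nbhd V E (length xs - Suc i) (xs ! i))"
    then show "v \<in> V" unfolding closed_nbhd_def by auto
  next
    fix v assume "v \<in> V"
    then obtain i where "i < length xs" "xs ! i = v" using xs by (metis in_set_conv_nth)
    then show "v \<in> (\<Union>i<length xs. closed_nbhd V E (length xs - Suc i) (xs ! i))"
      unfolding closed_nbhd_def using \<open>v \<in> V\<close> gdist_refl by fastforce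
  qed
  then have "\<exists>ts. length ts = b \<and> burning_seq V E ts"
    unfolding b_def burning_number_def
    using LeastI_ex[of "\<lambda>k. \<exists>ss. length ss = k \<and> burning_seq V E ss"] by blast
  then obtain ts where ts: "length ts = b" "burning_seq V E ts" by blast
  have b1: "b \<ge> 1"
  proof (rule ccontr)
    assume "\<not> 1 \<le> b"
    then have "ts = []" using ts by (cases ts) auto
    then show False using ts(2) assms(2) unfolding burning_seq_def by auto
  qed
  have len: "length ss = 3 * b - 2" using assms(3) b_def by simp
  have blen: "b \<le> length ss" using len b1 by simp
  define S where "S = set (take b ss)"
  have cover: "gdist_set V E v S \<le> enat (2 * b - 2)" if vV: "v \<in> V" for v
  proof (rule ccontr)
    assume "\<not> gdist_set V E v S \<le> enat (2 * b - 2)"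
    then have hv: "enat (2 * b - 2) < gdist_set V E v S" by simp
    define p where "p j = (if j < b then ss ! j else v)" for j
    have pV: "p j \<in> V" for j using vV assms(4) blen unfolding p_def by auto
    have pw: "enat (2 * b - 2) < gdist V E (p j') (p j)" if jj: "j < j'" "j' \<le> b" for j j'
    proof (cases "j' = b")
      case True
      have "ss ! j \<in> S" unfolding S_def using jj True blen nth_in_take by simp
      then have "gdist_set V E v S \<le> gdist V E v (ss ! j)"
        unfolding gdist_set_def by (rule INF_lower)
      then show ?thesis using hv True jj unfolding p_def by auto
    next
      case False
      then have j'b: "j' < b" using jj by simp
      have inS: "ss ! j \<in> set (take j' ss)" using jj j'b blen by (intro nth_in_take) auto
      have "gdist_set V E v S \<le> gdist_set V E v (set (take j' ss))"
        unfolding gdist_set_def S_def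
        by (rule INF_superset_mono) (use j'b set_take_subset_set_take[of j' b ss] in auto)
      also have "\<dots> \<le> gdist_set V E (ss ! j') (set (take j' ss))"
        using assms(5)[of j' v] jj j'b vV b_def by simp
      also have "\<dots> \<le> gdist V E (ss ! j') (ss ! j)"
        unfolding gdist_set_def using inS by (rule INF_lower)
      finally show ?thesis using hv jj j'b unfolding p_def by auto
    qed
    have ball: "\<exists>i<b. p j \<in> closed_nbhd V E (b - Suc i) (ts ! i)" for j
      using ts pV[of j] unfolding burning_seq_def by blast
    define f where "f j = (SOME i. i < b \<and> p j \<in> closed_nbhd V E (b - Suc i) (ts ! i))" for j
    have f: "f j < b \<and> p j \<in> closed_nbhd V E (b - Suc (f j)) (ts ! (f j))" for j
      unfolding f_def using someI_ex[OF ball[of j]] .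
    have "\<not> inj_on f {..b}"
    proof
      assume "inj_on f {..b}"
      moreover have "f ` {..b} \<subseteq> {..<b}" using f by auto
      ultimately have "card {..b} \<le> card {..<b}" by (intro card_inj_on_le) auto
      then show False by simp
    qed
    then obtain j j' where jj: "j \<in> {..b}" "j' \<in> {..b}" "j \<noteq> j'" "f j = f j'"
      unfolding inj_on_def by blast
    have conflict: "gdist V E (p y) (p x) \<le> enat (2 * b - 2)" if "f x = f y" for x y
    proof -
      have "gdist V E (p x) (ts ! f x) \<le> enat (b - Suc (f x))"
        "gdist V E (p y) (ts ! f x) \<le> enat (b - Suc (f x))"
        using f[of x] f[of y] that unfolding closed_nbhd_def by auto
      from gdist_two[OF g this] have "gdist V E (p y) (p x) \<le> enat (b - Suc (f x) + (b - Suc (f x)))" .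
      also have "\<dots> \<le> enat (2 * b - 2)" by simp
      finally show ?thesis .
    qed
    show False
    proof (cases "j < j'")
      case True
      then show False using pw[of j j'] conflict[of j j'] jj by auto
    next
      case False
      then have "j' < j" using jj by simp
      then show False using pw[of j' j] conflict[of j' j] jj by auto
    qed
  qed
  have Sfin: "finite S" "S \<noteq> {}" unfolding S_def using b1 blen by auto
  have "burning_seq V E ss"
    unfolding burning_seq_def
  proof (intro conjI equalityI subsetI)
    fix x assume "x \<in> set ss"
    then show "x \<in> V" using assms(4) by blast
  next
    fix v assume "v \<in> (\<Union>i<length ss. closed_nbhd V E (length ss - Suc i) (ss ! i))"
    then show "v \<in> V" unfolding closed_nbhd_def by auto
  next
    fix v assume vV: "v \<in> V"
    obtain w where w: "w \<in> S" "gdist_set V E v S = gdist V E v w"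
      using INF_attained[OF Sfin, of "gdist V E v"] unfolding gdist_set_def by blast
    obtain j where j: "j < b" "ss ! j = w" using in_take_nth[of w b ss] w(1) unfolding S_def by blast
    have "gdist V E v (ss ! j) \<le> enat (2 * b - 2)" using cover[OF vV] w j by simp
    also have "\<dots> \<le> enat (length ss - Suc j)" using len j by simp
    finally have "v \<in> closed_nbhd V E (length ss - Suc j) (ss ! j)"
      unfolding closed_nbhd_def using vV by simp
    then show "v \<in> (\<Union>i<length ss. closed_nbhd V E (length ss - Suc i) (ss ! i))"
      using j blen by auto
  qed
  moreover have "real (length ss) \<le> (3 - 2 / real b) * real b"
  proof -
    have "real (length ss) = 3 * real b - 2" using len b1 by simp
    also have "\<dots> = (3 - 2 / real b) * real b" using b1 by (simp add: field_simps)
    finally show ?thesis by simp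
  qed
  ultimately show ?thesis unfolding b_def by simp
qed

end
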